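(* Let $\varphi$ be an $\mathrm{LTL_{PSL}}$ formula, $D=(I^+,I^-)$ a partition of the set $I$ of its subformulae of the form $s\preceq s'$, and $\varphi_D$ the associated formula. If the language of the generalised Büchi automaton $\mathcal{A}_{\varphi_D}$ is non-empty, then $\varphi_D$ is $\mathrm{SLTL}$-satisfiable.
   Context: Propositional variables $\mathcal{P}$ and standpoint symbols $\mathcal{S}$ (with universal symbol $*$) are countably infinite. SLTL formulae: $\varphi ::= p \mid s \preceq s' \mid \neg\varphi \mid \varphi\wedge\varphi \mid \Diamond_s\varphi \mid \Box_s\varphi \mid X\varphi \mid \varphi\,U\,\varphi$. A model is $M=(\Pi,\lambda)$ with $\Pi\neq\emptyset$ a set of traces $\sigma:\mathbb{N}\to 2^{\mathcal{P}}$, $\lambda:\mathcal{S}\to 2^{\Pi}\setminus\{\emptyset\}$, $\lambda( * )=\Pi$; $M,\sigma,i\models p$ iff $p\in\sigma(i)$; $s\preceq s'$ holds iff $\lambda(s)\subseteq\lambda(s')$; $\Diamond_s\psi$ (resp. $\Box_s\psi$) holds at $\sigma,i$ iff $\psi$ holds at $\sigma',i$ for some (resp. all) $\sigma'\in\lambda(s)$; $X\psi$ holds at $\sigma,i$ iff $\psi$ holds at $\sigma,i+1$; $\psi U\chi$ holds at $\sigma,i$ iff $\chi$ holds at some $\sigma,i'$, $i'\ge i$, and $\psi$ at $\sigma,i''$ for all $i\le i''<i'$. $G\psi:=\neg(\top U\neg\psi)$. Satisfiable: holds at $\sigma,0$ for some $M$, $\sigma\in\Pi$. $\mathrm{LTL_{PSL}}$: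 SLTL formulae with no $X$ or $U$ in the scope of any $\Diamond_s$ or $\Box_s$. $\varphi_D:=\varphi[I^+\mapsto\top,I^-\mapsto\bot]\wedge G\big(\bigwedge_{(s\preceq s')\in I^+}(s\preceq s')\wedge\bigwedge_{(s\preceq s')\in I^-}(\Diamond_s p_{s,s'}\wedge\neg\Diamond_{s'}p_{s,s'})\big)$, where members of $I^+$ (resp. $I^-$) are replaced by $\top$ (resp. $\bot$) and the $p_{s,s'}$ are fresh variables. PSL is the temporal-free fragment; a PSL model is $(\Pi,V)$ with $\Pi$ finite nonempty, $V:\mathcal{S}\cup\mathcal{P}\to 2^{\Pi}$, $V(s)\neq\emptyset$ for all $s$, $V( * )=\Pi$; $\pi\models p$ iff $\pi\in V(p)$, $s\preceq s'$ iff $V(s)\subseteq V(s')$, $\Diamond_s\psi$/$\Box_s\psi$ iff $\psi$ holds at some/all $\pi'\in V(s)$. The closure $cl(\varphi_D)$ is the smallest set containing all subformulae of $\varphi_D$, $\top$ and $\bot$, closed under negation (identifying $\neg\neg\psi$ with $\psi$), and such that $\psi U\psi'\in cl(\varphi_D)$ implies $X(\psi U\psi')\in cl(\varphi_D)$. $B\subseteq cl(\varphi_D)$ is maximally consistent if $\top\in B$, $\bot\notin B$; $\psi\in B$ iff $\neg\psi\notin B$ for $\neg\psi\in cl(\varphi_D)$; $\psi_1\wedge\psi_2\in B$ iff $\psi_1,\psi_2\in B$; $\psi_1U\psi_2\in B$ iff $\psi_2\in B$ or $\{\psi_1,X(\psi_1U\psi_2)\}\subseteq B$. $B$ is standpoint-consistent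 if the conjunction of the members of $B$ that are PSL formulae is PSL-satisfiable; $B$ is s-elementary if maximally consistent and standpoint-consistent. $\mathcal{A}_{\varphi_D}=(Q,2^{\mathcal{P}(\varphi_D)},\delta,Q_0,\mathcal{F})$ where $\mathcal{P}(\varphi_D)$ is the set of variables of $\varphi_D$; $Q$ is the set of s-elementary sets; $Q_0=\{B\in Q:\varphi_D\in B\}$; $\mathcal{F}$ contains, for each $\psi_1U\psi_2\in cl(\varphi_D)$, the set $\{B\in Q:\psi_1U\psi_2\notin B\text{ or }\psi_2\in B\}$; $\delta(B,A)=\emptyset$ if $A\neq B\cap\mathcal{P}(\varphi_D)$, and otherwise $\delta(B,A)$ is the set of $B'\in Q$ such that for every $X\psi\in cl(\varphi_D)$, $X\psi\in B$ iff $\psi\in B'$. An infinite word is accepted if it has a run starting in $Q_0$ that visits each set of $\mathcal{F}$ infinitely often. *)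

theory Defs
  imports Main
begin

text \<open>Propositional variables are natural numbers; standpoint symbols are a
countably infinite type with the distinguished universal standpoint Star.\<close>

datatype stp = Star | Sp nat

datatype fml =
    Prop nat
  | Prec stp stp
  | Neg fml
  | And fml fml
  | Dia stp fml
  | Box stp fml
  | Next fml
  | Until fml fml

definition ftop :: fml where "ftop = Prec Star Star"
definition fbot :: fml where "fbot = Neg ftop"

fun neg :: "fml \<Rightarrow> fml" where
  "neg (Neg \<psi>) = \<psi>"
| "neg \<psi> = Neg \<psi>"

definition fG :: "fml \<Rightarrow> fml" where
  "fG \<psi> = Neg (Until ftop (Neg \<psi>))"

definition bigAnd :: "fml list \<Rightarrow> fml" where
  "bigAnd xs = foldr And xs ftop"

fun subf :: "fml \<Rightarrow> fml set" where
  "subf (Prop p) = {Prop p}"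
| "subf (Prec s t) = {Prec s t}"
| "subf (Neg \<psi>) = insert (Neg \<psi>) (subf \<psi>)"
| "subf (And \<psi> \<chi>) = insert (And \<psi> \<chi>) (subf \<psi> \<union> subf \<chi>)"
| "subf (Dia s \<psi>) = insert (Dia s \<psi>) (subf \<psi>)"
| "subf (Box s \<psi>) = insert (Box s \<psi>) (subf \<psi>)"
| "subf (Next \<psi>) = insert (Next \<psi>) (subf \<psi>)"
| "subf (Until \<psi> \<chi>) = insert (Until \<psi> \<chi>) (subf \<psi> \<union> subf \<chi>)"

fun vars :: "fml \<Rightarrow> nat set" where
  "vars (Prop p) = {p}"
| "vars (Prec s t) = {}"
| "vars (Neg \<psi>) = vars \<psi>"
| "vars (And \<psi> \<chi>) = vars \<psi> \<union> vars \<chi>"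
| "vars (Dia s \<psi>) = vars \<psi>"
| "vars (Box s \<psi>) = vars \<psi>"
| "vars (Next \<psi>) = vars \<psi>"
| "vars (Until \<psi> \<chi>) = vars \<psi> \<union> vars \<chi>"

fun psl :: "fml \<Rightarrow> bool" where
  "psl (Prop p) = True"
| "psl (Prec s t) = True"
| "psl (Neg \<psi>) = psl \<psi>"
| "psl (And \<psi> \<chi>) = (psl \<psi> \<and> psl \<chi>)"
| "psl (Dia s \<psi>) = psl \<psi>"
| "psl (Box s \<psi>) = psl \<psi>"
| "psl (Next \<psi>) = False"
| "psl (Until \<psi> \<chi>) = False"

fun ltl_psl :: "fml \<Rightarrow> bool" where
  "ltl_psl (Prop p) = True"
| "ltl_psl (Prec s t) = True"
| "ltl_psl (Neg \<psi>) = ltl_psl \<psi>"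
| "ltl_psl (And \<psi> \<chi>) = (ltl_psl \<psi> \<and> ltl_psl \<chi>)"
| "ltl_psl (Dia s \<psi>) = psl \<psi>"
| "ltl_psl (Box s \<psi>) = psl \<psi>"
| "ltl_psl (Next \<psi>) = ltl_psl \<psi>"
| "ltl_psl (Until \<psi> \<chi>) = (ltl_psl \<psi> \<and> ltl_psl \<chi>)"

type_synonym trace = "nat \<Rightarrow> nat set"

text \<open>A model is given by lam; the set of traces is lam Star.\<close>
definition sltl_model :: "(stp \<Rightarrow> trace set) \<Rightarrow> bool" where
  "sltl_model lam \<longleftrightarrow> (\<forall>s. lam s \<noteq> {} \<and> lam s \<subseteq> lam Star)"

fun sem :: "(stp \<Rightarrow> trace set) \<Rightarrow> trace \<Rightarrow> nat \<Rightarrow> fml \<Rightarrow> bool" where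
  "sem lam \<sigma> i (Prop p) = (p \<in> \<sigma> i)"
| "sem lam \<sigma> i (Prec s t) = (lam s \<subseteq> lam t)"
| "sem lam \<sigma> i (Neg \<psi>) = (\<not> sem lam \<sigma> i \<psi>)"
| "sem lam \<sigma> i (And \<psi> \<chi>) = (sem lam \<sigma> i \<psi> \<and> sem lam \<sigma> i \<chi>)"
| "sem lam \<sigma> i (Dia s \<psi>) = (\<exists>\<sigma>'\<in>lam s. sem lam \<sigma>' i \<psi>)"
| "sem lam \<sigma> i (Box s \<psi>) = (\<forall>\<sigma>'\<in>lam s. sem lam \<sigma>' i \<psi>)"
| "sem lam \<sigma> i (Next \<psi>) = sem lam \<sigma> (Suc i) \<psi>"
| "sem lam \<sigma> i (Until \<psi> \<chi>) =
     (\<exists>i'\<ge>i. sem lam \<sigma> i' \<chi> \<and> (\<forall>i''. i \<le> i'' \<and> i'' < i' \<longrightarrow> sem lam \<sigma> i'' \<psi>))"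

definition sltl_sat :: "fml \<Rightarrow> bool" where
  "sltl_sat \<phi> \<longleftrightarrow> (\<exists>lam. sltl_model lam \<and> (\<exists>\<sigma>\<in>lam Star. sem lam \<sigma> 0 \<phi>))"

text \<open>Worlds are natural numbers (every finite world set embeds into nat).\<close>
fun psl_sem :: "(stp \<Rightarrow> nat set) \<Rightarrow> (nat \<Rightarrow> nat set) \<Rightarrow> nat \<Rightarrow> fml \<Rightarrow> bool" where
  "psl_sem Vs Vp \<pi> (Prop p) = (\<pi> \<in> Vp p)"
| "psl_sem Vs Vp \<pi> (Prec s t) = (Vs s \<subseteq> Vs t)"
| "psl_sem Vs Vp \<pi> (Neg \<psi>) = (\<not> psl_sem Vs Vp \<pi> \<psi>)"
| "psl_sem Vs Vp \<pi> (And \<psi> \<chi>) = (psl_sem Vs Vp \<pi> \<psi> \<and> psl_sem Vs Vp \<pi> \<chi>)"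
| "psl_sem Vs Vp \<pi> (Dia s \<psi>) = (\<exists>\<pi>'\<in>Vs s. psl_sem Vs Vp \<pi>' \<psi>)"
| "psl_sem Vs Vp \<pi> (Box s \<psi>) = (\<forall>\<pi>'\<in>Vs s. psl_sem Vs Vp \<pi>' \<psi>)"
| "psl_sem Vs Vp \<pi> (Next \<psi>) = False"
| "psl_sem Vs Vp \<pi> (Until \<psi> \<chi>) = False"

definition psl_model :: "(stp \<Rightarrow> nat set) \<Rightarrow> (nat \<Rightarrow> nat set) \<Rightarrow> bool" where
  "psl_model Vs Vp \<longleftrightarrow> finite (Vs Star) \<and> Vs Star \<noteq> {}
     \<and> (\<forall>s. Vs s \<noteq> {} \<and> Vs s \<subseteq> Vs Star) \<and> (\<forall>p. Vp p \<subseteq> Vs Star)"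

definition psl_sat_set :: "fml set \<Rightarrow> bool" where
  "psl_sat_set S \<longleftrightarrow> (\<exists>Vs Vp. psl_model Vs Vp \<and> (\<exists>\<pi>\<in>Vs Star. \<forall>\<psi>\<in>S. psl_sem Vs Vp \<pi> \<psi>))"

fun repl :: "(stp \<times> stp) set \<Rightarrow> (stp \<times> stp) set \<Rightarrow> fml \<Rightarrow> fml" where
  "repl Ip Im (Prop p) = Prop p"
| "repl Ip Im (Prec s t) =
     (if (s, t) \<in> Ip then ftop else if (s, t) \<in> Im then fbot else Prec s t)"
| "repl Ip Im (Neg \<psi>) = Neg (repl Ip Im \<psi>)"
| "repl Ip Im (And \<psi> \<chi>) = And (repl Ip Im \<psi>) (repl Ip Im \<chi>)"
| "repl Ip Im (Dia s \<psi>) = Dia s (repl Ip Im \<psi>)"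
| "repl Ip Im (Box s \<psi>) = Box s (repl Ip Im \<psi>)"
| "repl Ip Im (Next \<psi>) = Next (repl Ip Im \<psi>)"
| "repl Ip Im (Until \<psi> \<chi>) = Until (repl Ip Im \<psi>) (repl Ip Im \<chi>)"

definition precs :: "fml \<Rightarrow> (stp \<times> stp) set" where
  "precs \<phi> = {(s, t). Prec s t \<in> subf \<phi>}"

text \<open>phi_D, where I+ and I- are given as lists (fixing the order of the big
conjunctions) and fr gives the fresh variables p_{s,s'}.\<close>
definition phiD :: "fml \<Rightarrow> (stp \<times> stp) list \<Rightarrow> (stp \<times> stp) list \<Rightarrow> (stp \<Rightarrow> stp \<Rightarrow> nat) \<Rightarrow> fml" where
  "phiD \<phi> ip im fr =
     And (repl (set ip) (set im) \<phi>)
         (fG (And (bigAnd (map (\<lambda>(s, t). Prec s t) ip))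
                  (bigAnd (map (\<lambda>(s, t). And (Dia s (Prop (fr s t))) (Neg (Dia t (Prop (fr s t))))) im))))"

inductive_set cl :: "fml \<Rightarrow> fml set" for \<phi> :: fml where
  cl_sub: "\<psi> \<in> subf \<phi> \<Longrightarrow> \<psi> \<in> cl \<phi>"
| cl_top: "ftop \<in> cl \<phi>"
| cl_bot: "fbot \<in> cl \<phi>"
| cl_neg: "\<psi> \<in> cl \<phi> \<Longrightarrow> neg \<psi> \<in> cl \<phi>"
| cl_until: "Until \<psi> \<chi> \<in> cl \<phi> \<Longrightarrow> Next (Until \<psi> \<chi>) \<in> cl \<phi>"

definition max_cons :: "fml \<Rightarrow> fml set \<Rightarrow> bool" where
  "max_cons \<phi> B \<longleftrightarrow> B \<subseteq> cl \<phi> \<and> ftop \<in> B \<and> fbot \<notin> B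
     \<and> (\<forall>\<psi>. Neg \<psi> \<in> cl \<phi> \<longrightarrow> (\<psi> \<in> B \<longleftrightarrow> Neg \<psi> \<notin> B))
     \<and> (\<forall>\<psi> \<chi>. And \<psi> \<chi> \<in> cl \<phi> \<longrightarrow> (And \<psi> \<chi> \<in> B \<longleftrightarrow> \<psi> \<in> B \<and> \<chi> \<in> B))
     \<and> (\<forall>\<psi> \<chi>. Until \<psi> \<chi> \<in> cl \<phi> \<longrightarrow>
          (Until \<psi> \<chi> \<in> B \<longleftrightarrow> \<chi> \<in> B \<or> (\<psi> \<in> B \<and> Next (Until \<psi> \<chi>) \<in> B)))"

definition stp_cons :: "fml set \<Rightarrow> bool" where
  "stp_cons B \<longleftrightarrow> psl_sat_set {\<psi> \<in> B. psl \<psi>}"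

definition s_elem :: "fml \<Rightarrow> fml set \<Rightarrow> bool" where
  "s_elem \<phi> B \<longleftrightarrow> max_cons \<phi> B \<and> stp_cons B"

definition aQ :: "fml \<Rightarrow> fml set set" where
  "aQ \<phi> = {B. s_elem \<phi> B}"

definition aQ0 :: "fml \<Rightarrow> fml set set" where
  "aQ0 \<phi> = {B \<in> aQ \<phi>. \<phi> \<in> B}"

definition aF :: "fml \<Rightarrow> fml set set set" where
  "aF \<phi> = {{B \<in> aQ \<phi>. Until \<psi> \<chi> \<notin> B \<or> \<chi> \<in> B} | \<psi> \<chi>. Until \<psi> \<chi> \<in> cl \<phi>}"

definition adelta :: "fml \<Rightarrow> fml set \<Rightarrow> nat set \<Rightarrow> fml set set" where
  "adelta \<phi> B A =
     (if A \<noteq> {p \<in> vars \<phi>. Prop p \<in> B} then {}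
      else {B' \<in> aQ \<phi>. \<forall>\<psi>. Next \<psi> \<in> cl \<phi> \<longrightarrow> (Next \<psi> \<in> B \<longleftrightarrow> \<psi> \<in> B')})"

definition accepting_run :: "fml \<Rightarrow> (nat \<Rightarrow> nat set) \<Rightarrow> (nat \<Rightarrow> fml set) \<Rightarrow> bool" where
  "accepting_run \<phi> w r \<longleftrightarrow> r 0 \<in> aQ0 \<phi>
     \<and> (\<forall>i. r (Suc i) \<in> adelta \<phi> (r i) (w i))
     \<and> (\<forall>F\<in>aF \<phi>. \<exists>\<^sub>\<infinity>i. r i \<in> F)"

definition lang_nonempty :: "fml \<Rightarrow> bool" where
  "lang_nonempty \<phi> \<longleftrightarrow>
     (\<exists>w r. (\<forall>i. w i \<subseteq> vars \<phi>) \<and> accepting_run \<phi> w r)"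

end

theory Submission
  imports Defs "HOL-Library.Infinite_Set"
begin

lemma subf_refl[simp]: "\<psi> \<in> subf \<psi>"
  by (induction \<psi>) auto

lemma subf_trans: "\<chi> \<in> subf \<psi> \<Longrightarrow> subf \<chi> \<subseteq> subf \<psi>"
  by (induction \<psi>) auto

lemma subf_neg: "subf (neg \<psi>) \<subseteq> insert (Neg \<psi>) (subf \<psi>)"
  by (cases \<psi>) auto

lemma neg_cases: "neg \<psi> = Neg \<psi> \<or> (\<exists>a. \<psi> = Neg a \<and> neg \<psi> = a)"
  by (cases \<psi>) auto

lemma cl_subf: "\<psi> \<in> cl \<phi> \<Longrightarrow> subf \<psi> \<subseteq> cl \<phi>"
proof (induction rule: cl.induct)
  case (cl_sub \<psi>)
  then show ?case using subf_trans cl.cl_sub by blast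
next
  case cl_top
  then show ?case by (simp add: ftop_def cl.cl_top[unfolded ftop_def])
next
  case cl_bot
  then show ?case using cl.cl_top cl.cl_bot by (simp add: fbot_def ftop_def)
next
  case (cl_neg \<psi>)
  show ?case
  proof (cases "neg \<psi> = Neg \<psi>")
    case True
    then show ?thesis using cl_neg cl.cl_neg[OF cl_neg.hyps] by (metis insert_subset subf.simps(3))
  next
    case False
    then obtain a where "\<psi> = Neg a" "neg \<psi> = a" using neg_cases by blast
    then show ?thesis using cl_neg by auto
  qed
next
  case (cl_until \<psi> \<chi>)
  then show ?case using cl.cl_until[OF cl_until.hyps] by auto
qed

fun goodn :: "(stp \<times> stp) set \<Rightarrow> fml \<Rightarrow> bool" where
  "goodn I (Prec s t) = ((s, t) \<in> I \<or> (s = Star \<and> t = Star))"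
| "goodn I (Dia s x) = psl x"
| "goodn I (Box s x) = psl x"
| "goodn I _ = True"

lemma psl_subf: "psl \<psi> \<Longrightarrow> \<chi> \<in> subf \<psi> \<Longrightarrow> psl \<chi>"
  by (induction \<psi>) auto

lemma psl_repl: "psl \<psi> \<Longrightarrow> psl (repl Ip Im \<psi>)"
  by (induction \<psi>) (auto simp: ftop_def fbot_def)

lemma good_ftop: "\<chi> \<in> subf ftop \<Longrightarrow> goodn I \<chi>"
  by (simp add: ftop_def)

lemma good_fbot: "\<chi> \<in> subf fbot \<Longrightarrow> goodn I \<chi>"
  by (auto simp: ftop_def fbot_def)

lemma repl_good:
  "(\<forall>s t. Prec s t \<in> subf \<psi> \<longrightarrow> (s, t) \<in> Ip \<union> Im) \<Longrightarrow> ltl_psl \<psi> \<or> psl \<psi>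
   \<Longrightarrow> \<chi> \<in> subf (repl Ip Im \<psi>) \<Longrightarrow> goodn Ip \<chi>"
proof (induction \<psi>)
  case (Prec s t)
  then show ?case using good_ftop good_fbot by (auto split: if_splits)
next
  case (Dia s \<psi>)
  then have p: "psl \<psi>" by auto
  have "goodn Ip (Dia s (repl Ip Im \<psi>))" using psl_repl[OF p] by simp
  then show ?case using Dia p by auto
next
  case (Box s \<psi>)
  then have p: "psl \<psi>" by auto
  have "goodn Ip (Box s (repl Ip Im \<psi>))" using psl_repl[OF p] by simp
  then show ?case using Box p by auto
qed auto

lemma bigAnd_good:
  "\<forall>y\<in>set xs. \<forall>\<chi>\<in>subf y. goodn I \<chi> \<Longrightarrow> \<chi> \<in> subf (bigAnd xs) \<Longrightarrow> goodn I \<chi>"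
  by (induction xs) (auto simp: bigAnd_def ftop_def)

lemma phiD_good:
  assumes "ltl_psl \<phi>" "set ip \<union> set im = precs \<phi>"
    and "\<chi> \<in> subf (phiD \<phi> ip im fr)"
  shows "goodn (set ip) \<chi>"
proof -
  have r: "\<chi> \<in> subf (repl (set ip) (set im) \<phi>) \<Longrightarrow> goodn (set ip) \<chi>"
    by (rule repl_good) (use assms in \<open>auto simp: precs_def\<close>)
  have b1: "\<chi> \<in> subf (bigAnd (map (\<lambda>(s, t). Prec s t) ip)) \<Longrightarrow> goodn (set ip) \<chi>"
    by (rule bigAnd_good) auto
  have b2: "\<chi> \<in> subf (bigAnd (map (\<lambda>(s, t). And (Dia s (Prop (fr s t))) (Neg (Dia t (Prop (fr s t))))) im)) \<Longrightarrow> goodn (set ip) \<chi>"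
    by (rule bigAnd_good) auto
  show ?thesis using assms(3) r b1 b2 good_ftop
    unfolding phiD_def fG_def by auto
qed

lemma cl_good:
  assumes "ltl_psl \<phi>" "set ip \<union> set im = precs \<phi>"
  shows "\<psi> \<in> cl (phiD \<phi> ip im fr) \<Longrightarrow> \<forall>\<chi>\<in>subf \<psi>. goodn (set ip) \<chi>"
proof (induction rule: cl.induct)
  case (cl_sub \<psi>)
  then show ?case using phiD_good[OF assms] subf_trans by blast
next
  case cl_top
  then show ?case using good_ftop by blast
next
  case cl_bot
  then show ?case using good_fbot by blast
next
  case (cl_neg \<psi>)
  then show ?case using subf_neg[of \<psi>] by auto
next
  case (cl_until \<psi> \<chi>)
  then show ?case by auto
qed


definition Sq :: "(nat \<Rightarrow> stp \<Rightarrow> nat set) \<Rightarrow> stp \<Rightarrow> (nat \<Rightarrow> nat) set" where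
  "Sq Vs s = {f. \<forall>i. f i \<in> Vs i s}"

definition trc :: "(nat \<Rightarrow> nat \<Rightarrow> nat set) \<Rightarrow> (nat \<Rightarrow> nat) \<Rightarrow> trace" where
  "trc Vp f = (\<lambda>i. {p. f i \<in> Vp i p})"

definition mlam :: "(nat \<Rightarrow> stp \<Rightarrow> nat set) \<Rightarrow> (nat \<Rightarrow> nat \<Rightarrow> nat set) \<Rightarrow> stp \<Rightarrow> trace set" where
  "mlam Vs Vp s = trc Vp ` Sq Vs s"

lemma Sq_point:
  assumes ne: "\<forall>i s. Vs i s \<noteq> {}" and x: "x \<in> Vs i s"
  shows "\<exists>g\<in>Sq Vs s. g i = x"
proof -
  let ?g = "\<lambda>j. if j = i then x else (SOME y. y \<in> Vs j s)"
  have "?g \<in> Sq Vs s" unfolding Sq_def using x ne by (auto intro: someI_ex simp: ex_in_conv[symmetric])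
  then show ?thesis by (intro bexI[of _ ?g]) auto
qed

lemma psl_truth:
  assumes ne: "\<forall>i s. Vs i s \<noteq> {}"
  shows "psl \<psi> \<Longrightarrow> (\<forall>s t. Prec s t \<in> subf \<psi> \<longrightarrow> (\<forall>j. Vs j s \<subseteq> Vs j t))
    \<Longrightarrow> sem (mlam Vs Vp) (trc Vp f) i \<psi> = psl_sem (Vs i) (Vp i) (f i) \<psi>"
proof (induction \<psi> arbitrary: f)
  case (Prop x)
  then show ?case by (simp add: trc_def)
next
  case (Prec s t)
  then have "Sq Vs s \<subseteq> Sq Vs t" by (auto simp: Sq_def)
  then show ?case using Prec by (auto simp: mlam_def)
next
  case (Dia s \<psi>)
  then have IH: "\<And>g. sem (mlam Vs Vp) (trc Vp g) i \<psi> = psl_sem (Vs i) (Vp i) (g i) \<psi>" by auto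
  show ?case
  proof
    assume "sem (mlam Vs Vp) (trc Vp f) i (Dia s \<psi>)"
    then obtain g where "g \<in> Sq Vs s" "sem (mlam Vs Vp) (trc Vp g) i \<psi>" by (auto simp: mlam_def)
    then show "psl_sem (Vs i) (Vp i) (f i) (Dia s \<psi>)" using IH by (auto simp: Sq_def)
  next
    assume "psl_sem (Vs i) (Vp i) (f i) (Dia s \<psi>)"
    then obtain x where x: "x \<in> Vs i s" "psl_sem (Vs i) (Vp i) x \<psi>" by auto
    then obtain g where "g \<in> Sq Vs s" "g i = x" using Sq_point[OF ne] by blast
    then show "sem (mlam Vs Vp) (trc Vp f) i (Dia s \<psi>)" using IH x by (auto simp: mlam_def)
  qed
next
  case (Box s \<psi>)
  then have IH: "\<And>g. sem (mlam Vs Vp) (trc Vp g) i \<psi> = psl_sem (Vs i) (Vp i) (g i) \<psi>" by auto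
  show ?case
  proof
    assume a: "sem (mlam Vs Vp) (trc Vp f) i (Box s \<psi>)"
    show "psl_sem (Vs i) (Vp i) (f i) (Box s \<psi>)"
    proof (simp, intro ballI)
      fix x assume "x \<in> Vs i s"
      then obtain g where "g \<in> Sq Vs s" "g i = x" using Sq_point[OF ne] by blast
      then show "psl_sem (Vs i) (Vp i) x \<psi>" using a IH by (auto simp: mlam_def)
    qed
  next
    assume "psl_sem (Vs i) (Vp i) (f i) (Box s \<psi>)"
    then show "sem (mlam Vs Vp) (trc Vp f) i (Box s \<psi>)" using IH by (auto simp: mlam_def Sq_def)
  qed
qed auto


theorem lemma5:
  fixes \<phi> :: fml and ip im :: "(stp \<times> stp) list" and fr :: "stp \<Rightarrow> stp \<Rightarrow> nat"
  assumes "ltl_psl \<phi>"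
    and "set ip \<union> set im = precs \<phi>" and "set ip \<inter> set im = {}"
    and "distinct ip" and "distinct im"
    and "inj_on (\<lambda>(s, t). fr s t) (set im)"
    and "\<forall>(s, t) \<in> set im. fr s t \<notin> vars \<phi>"
    and "lang_nonempty (phiD \<phi> ip im fr)"
  shows "sltl_sat (phiD \<phi> ip im fr)"
proof -
  define P where "P = phiD \<phi> ip im fr"
  from assms(8) obtain w r where acc: "accepting_run P w r"
    by (auto simp: lang_nonempty_def P_def)
  have r0: "r 0 \<in> aQ P" and P0: "P \<in> r 0" using acc by (auto simp: accepting_run_def aQ0_def)
  have rstep: "r (Suc i) \<in> aQ P \<and> (\<forall>\<psi>. Next \<psi> \<in> cl P \<longrightarrow> (Next \<psi> \<in> r i \<longleftrightarrow> \<psi> \<in> r (Suc i)))" for i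
  proof -
    have "r (Suc i) \<in> adelta P (r i) (w i)" using acc by (auto simp: accepting_run_def)
    then show ?thesis by (auto simp: adelta_def split: if_splits)
  qed
  have rQ: "r i \<in> aQ P" for i using r0 rstep by (cases i) auto
  have rN: "Next \<psi> \<in> cl P \<Longrightarrow> (Next \<psi> \<in> r i \<longleftrightarrow> \<psi> \<in> r (Suc i))" for \<psi> i
    using rstep by blast
  have mc: "max_cons P (r i)" and sc: "stp_cons (r i)" for i
    using rQ[of i] by (auto simp: aQ_def s_elem_def)
  have infF: "\<forall>F\<in>aF P. \<exists>\<^sub>\<infinity>i. r i \<in> F" using acc by (auto simp: accepting_run_def)
  have "\<forall>i. \<exists>Vs Vp \<pi>. psl_model Vs Vp \<and> \<pi> \<in> Vs Star \<and> (\<forall>\<psi>\<in>r i. psl \<psi> \<longrightarrow> psl_sem Vs Vp \<pi> \<psi>)"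
    using sc unfolding stp_cons_def psl_sat_set_def by fastforce
  then obtain Vs Vp \<pi> where mod: "\<And>i. psl_model (Vs i) (Vp i)" and pin: "\<And>i. \<pi> i \<in> Vs i Star"
    and sat: "\<And>i \<psi>. \<psi> \<in> r i \<Longrightarrow> psl \<psi> \<Longrightarrow> psl_sem (Vs i) (Vp i) (\<pi> i) \<psi>"
    by metis
  have ne: "\<forall>i s. Vs i s \<noteq> {}" and subStar: "\<And>i s. Vs i s \<subseteq> Vs i Star"
    using mod by (auto simp: psl_model_def)
  have good: "\<psi> \<in> cl P \<Longrightarrow> \<chi> \<in> subf \<psi> \<Longrightarrow> goodn (set ip) \<chi>" for \<psi> \<chi>
    using cl_good[OF assms(1,2)] unfolding P_def by blast
  have clsub: "\<psi> \<in> cl P \<Longrightarrow> \<chi> \<in> subf \<psi> \<Longrightarrow> \<chi> \<in> cl P" for \<psi> \<chi>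
    using cl_subf by blast
  have Pcl: "P \<in> cl P" by (rule cl_sub) (rule subf_refl)
  define X where "X = And (bigAnd (map (\<lambda>(s, t). Prec s t) ip))
                  (bigAnd (map (\<lambda>(s, t). And (Dia s (Prop (fr s t))) (Neg (Dia t (Prop (fr s t))))) im))"
  define U where "U = Until ftop (Neg X)"
  have Pdef: "P = And (repl (set ip) (set im) \<phi>) (Neg U)"
    unfolding P_def phiD_def X_def U_def fG_def by simp
  have NegUcl: "Neg U \<in> cl P" using clsub[OF Pcl] Pdef by simp
  have Ucl: "U \<in> cl P" using clsub[OF NegUcl, of U] subf_refl[of U] by simp
  have NXcl: "Neg X \<in> cl P" using clsub[OF Ucl, of "Neg X"] U_def subf_refl[of X] by simp
  have Xcl: "X \<in> cl P" using clsub[OF NXcl, of X] subf_refl[of X] by simp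
  have NUcl: "Next U \<in> cl P" using Ucl U_def by (simp add: cl_until)
  have top: "ftop \<in> r i" for i using mc[of i] by (simp add: max_cons_def)
  have "Neg U \<in> r 0" using mc[of 0] P0 Pcl Pdef by (simp add: max_cons_def)
  then have U0: "U \<notin> r 0" using mc[of 0] NegUcl by (simp add: max_cons_def)
  have Unot: "U \<notin> r i" for i
  proof (induction i)
    case 0 then show ?case using U0 .
  next
    case (Suc i)
    then have "Next U \<notin> r i" using mc[of i] Ucl top[of i] unfolding U_def max_cons_def by blast
    then show ?case using rN[OF NUcl] by blast
  qed
  have Xin: "X \<in> r i" for i
  proof -
    have "Neg X \<notin> r i" using mc[of i] Ucl Unot[of i] unfolding U_def max_cons_def by blast
    then show ?thesis using mc[of i] NXcl by (simp add: max_cons_def)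
  qed
  have bigAnd_in: "bigAnd xs \<in> cl P \<Longrightarrow> bigAnd xs \<in> r i \<Longrightarrow> y \<in> set xs \<Longrightarrow> y \<in> r i" for xs y i
  proof (induction xs)
    case Nil then show ?case by simp
  next
    case (Cons a xs)
    have c: "And a (bigAnd xs) \<in> cl P" using Cons.prems(1) by (simp add: bigAnd_def)
    have "a \<in> r i \<and> bigAnd xs \<in> r i" using mc[of i] c Cons.prems(2) by (simp add: max_cons_def bigAnd_def)
    moreover have "bigAnd xs \<in> cl P" using clsub[OF c] by simp
    ultimately show ?case using Cons by auto
  qed
  have incl: "(s, t) \<in> set ip \<Longrightarrow> Vs j s \<subseteq> Vs j t" for s t j
  proof -
    assume st: "(s, t) \<in> set ip"
    let ?A = "bigAnd (map (\<lambda>(s, t). Prec s t) ip)"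
    have Acl: "?A \<in> cl P" using clsub[OF Xcl] X_def by simp
    have "?A \<in> r j" using mc[of j] Xcl Xin[of j] X_def by (simp add: max_cons_def)
    then have "Prec s t \<in> r j" using bigAnd_in[OF Acl] st by force
    then show ?thesis using sat[of "Prec s t" j] by simp
  qed
  define lam where "lam = mlam Vs Vp"
  define \<sigma> where "\<sigma> = trc Vp \<pi>"
  have pslcase: "\<psi> \<in> cl P \<Longrightarrow> psl \<psi> \<Longrightarrow> sem lam \<sigma> i \<psi> = (\<psi> \<in> r i)" for \<psi> i
  proof -
    assume cl: "\<psi> \<in> cl P" and p: "psl \<psi>"
    have "\<forall>s t. Prec s t \<in> subf \<psi> \<longrightarrow> (\<forall>j. Vs j s \<subseteq> Vs j t)"
      using good[OF cl] incl by fastforce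
    then have e: "sem lam \<sigma> i \<psi> = psl_sem (Vs i) (Vp i) (\<pi> i) \<psi>"
      unfolding lam_def \<sigma>_def using psl_truth[OF ne p] by blast
    have "psl_sem (Vs i) (Vp i) (\<pi> i) \<psi> = (\<psi> \<in> r i)"
    proof (cases "\<psi> \<in> r i")
      case True then show ?thesis using sat p by blast
    next
      case False
      show ?thesis
      proof (cases "neg \<psi> = Neg \<psi>")
        case True
        then have "Neg \<psi> \<in> cl P" using cl_neg[OF cl] by simp
        then have "Neg \<psi> \<in> r i" using mc[of i] False by (simp add: max_cons_def)
        then show ?thesis using sat[of "Neg \<psi>" i] p False by simp
      next
        case nn: False
        then obtain a where a: "\<psi> = Neg a" using neg_cases by blast
        then have "a \<in> r i" using mc[of i] False cl by (simp add: max_cons_def)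
        then show ?thesis using sat[of a i] p False a by simp
      qed
    qed
    then show ?thesis using e by simp
  qed
  have truth: "\<psi> \<in> cl P \<Longrightarrow> sem lam \<sigma> i \<psi> = (\<psi> \<in> r i)" for \<psi> i
  proof (induction \<psi> arbitrary: i)
    case (Prop x)
    show ?case by (rule pslcase[OF Prop.prems]) simp
  next
    case (Prec s t)
    show ?case by (rule pslcase[OF Prec.prems]) simp
  next
    case (Neg \<psi>)
    show ?case
    proof (cases "psl \<psi>")
      case True then show ?thesis by (intro pslcase[OF Neg.prems]) simp
    next
      case False
      have "\<psi> \<in> cl P" using clsub[OF Neg.prems] by simp
      then show ?thesis using Neg mc[of i] by (simp add: max_cons_def)
    qed
  next
    case (And \<psi>1 \<psi>2)
    have "\<psi>1 \<in> cl P" "\<psi>2 \<in> cl P" using clsub[OF And.prems] by auto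
    then show ?case using And mc[of i] by (simp add: max_cons_def)
  next
    case (Dia s \<psi>)
    have "psl \<psi>" using good[OF Dia.prems subf_refl] by simp
    then show ?case by (intro pslcase[OF Dia.prems]) simp
  next
    case (Box s \<psi>)
    have "psl \<psi>" using good[OF Box.prems subf_refl] by simp
    then show ?case by (intro pslcase[OF Box.prems]) simp
  next
    case (Next \<psi>)
    have "\<psi> \<in> cl P" using clsub[OF Next.prems] by simp
    then show ?case using Next rN[OF Next.prems] by simp
  next
    case (Until a b)
    have acl: "a \<in> cl P" and bcl: "b \<in> cl P" using clsub[OF Until.prems] by auto
    have IHa: "\<And>j. sem lam \<sigma> j a = (a \<in> r j)" using Until.IH(1) acl by blast
    have IHb: "\<And>j. sem lam \<sigma> j b = (b \<in> r j)" using Until.IH(2) bcl by blast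
    have Ucl': "Until a b \<in> cl P" by fact
    have NUcl': "Next (Until a b) \<in> cl P" using Ucl' by (rule cl_until)
    have unf: "\<And>j. Until a b \<in> r j \<longleftrightarrow> b \<in> r j \<or> (a \<in> r j \<and> Until a b \<in> r (Suc j))"
    proof -
      fix j
      have "Until a b \<in> r j \<longleftrightarrow> b \<in> r j \<or> (a \<in> r j \<and> Next (Until a b) \<in> r j)"
        using mc[of j] Ucl' unfolding max_cons_def by blast
      then show "Until a b \<in> r j \<longleftrightarrow> b \<in> r j \<or> (a \<in> r j \<and> Until a b \<in> r (Suc j))"
        using rN[OF NUcl', of j] by simp
    qed
    show ?case
    proof
      assume "sem lam \<sigma> i (Until a b)"
      then obtain i' where i': "i' \<ge> i" "b \<in> r i'" "\<forall>k. i \<le> k \<and> k < i' \<longrightarrow> a \<in> r k"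
        unfolding sem.simps IHa IHb by blast
      have "\<forall>j. j + n = i' \<longrightarrow> i \<le> j \<longrightarrow> Until a b \<in> r j" for n
      proof (induction n)
        case 0 show ?case proof (intro allI impI) fix j assume "j + 0 = i'" then show "Until a b \<in> r j" using i'(2) unf[of j] by simp qed
      next
        case (Suc n)
        show ?case
        proof (intro allI impI)
          fix j assume j: "j + Suc n = i'" "i \<le> j"
          then have "Until a b \<in> r (Suc j)" using Suc.IH by simp
          moreover have "a \<in> r j" using i'(3) j by simp
          ultimately show "Until a b \<in> r j" using unf[of j] by blast
        qed
      qed
      from this[of "i' - i"] show "Until a b \<in> r i" using i'(1) by simp
    next
      assume Ui: "Until a b \<in> r i"
      have exb: "\<exists>j\<ge>i. b \<in> r j"
      proof (rule ccontr)
        assume nb: "\<not> (\<exists>j\<ge>i. b \<in> r j)"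
        have allU: "Until a b \<in> r j" if "j \<ge> i" for j
          using that
        proof (induction j rule: dec_induct)
          case base then show ?case using Ui .
        next
          case (step j) then show ?case using unf nb by blast
        qed
        have "{B \<in> aQ P. Until a b \<notin> B \<or> b \<in> B} \<in> aF P" using Ucl' by (auto simp: aF_def)
        then have "\<exists>\<^sub>\<infinity>j. r j \<in> {B \<in> aQ P. Until a b \<notin> B \<or> b \<in> B}" using infF by blast
        then obtain j where "j > i" "r j \<in> {B \<in> aQ P. Until a b \<notin> B \<or> b \<in> B}"
          unfolding INFM_nat by blast
        then show False using allU nb by auto
      qed
      define j where "j = (LEAST j. j \<ge> i \<and> b \<in> r j)"
      have j: "j \<ge> i" "b \<in> r j" using LeastI_ex[OF exb[unfolded Bex_def[symmetric]]] exb
        unfolding j_def by (smt (verit) LeastI_ex)+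
      have jmin: "\<And>k. i \<le> k \<Longrightarrow> k < j \<Longrightarrow> b \<notin> r k" unfolding j_def
        using not_less_Least by blast
      have Uk0: "k \<le> j \<longrightarrow> Until a b \<in> r k" if "i \<le> k" for k
        using that
      proof (induction k rule: dec_induct)
        case base then show ?case using Ui by blast
      next
        case (step k)
        show ?case
        proof
          assume "Suc k \<le> j"
          then have "Until a b \<in> r k" "b \<notin> r k" using step jmin by auto
          then show "Until a b \<in> r (Suc k)" using unf[of k] by blast
        qed
      qed
      have Uk: "Until a b \<in> r k" if "i \<le> k" "k \<le> j" for k using Uk0 that by blast
      have "\<forall>k. i \<le> k \<and> k < j \<longrightarrow> a \<in> r k" proof (intro allI impI)
        fix k assume "i \<le> k \<and> k < j"
        then have "Until a b \<in> r k" "b \<notin> r k" using Uk jmin by auto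
        then show "a \<in> r k" using unf[of k] by blast
      qed
      then show "sem lam \<sigma> i (Until a b)" using j unfolding sem.simps IHa IHb by blast
    qed
  qed
  have model: "sltl_model lam"
  proof -
    have "Sq Vs s \<noteq> {}" for s
    proof -
      obtain x where "x \<in> Vs 0 s" using ne by blast
      then show ?thesis using Sq_point[OF ne, of x 0 s] by blast
    qed
    moreover have "Sq Vs s \<subseteq> Sq Vs Star" for s using subStar by (auto simp: Sq_def)
    ultimately show ?thesis unfolding sltl_model_def lam_def mlam_def by blast
  qed
  have "\<sigma> \<in> lam Star" unfolding lam_def mlam_def \<sigma>_def Sq_def using pin by blast
  moreover have "sem lam \<sigma> 0 P" using truth[OF Pcl] P0 by simp
  ultimately show ?thesis using model unfolding sltl_sat_def P_def by blast
qed

end
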